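(* Let $V\subseteq\mathbb{R}^3$ be a compact convex set and $y$ a point in the interior of $V$. Let $r:=\max_{z'\in\partial V}|z'-y|$, $|V|$ the volume of $V$, and $\Gamma_1:=(2/5)^{2/3}/40$. Then there exists $y'\in V$ such that \[\int_V\big[|x-y|^2-d^2(x,\{y,y'\})\big]\,dx\ \ge\ \max\Big\{\frac{2^2\cdot 3^3}{5^2\cdot 10^3}\,r^2|V|,\ \Gamma_1|V|^{5/3}\Big\},\] where $d(x,\{y,y'\})=\min\{|x-y|,|x-y'|\}$. *)

theory Defs
  imports "HOL-Analysis.Analysis"
begin

end

theory Submission
  imports Defs "HOL-Analysis.Analysis"
begin

lemma cont_int_compact:
  fixes f :: "'a::euclidean_space \<Rightarrow> 'b::euclidean_space"
  assumes S: "compact S" and f: "continuous_on S f"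
  shows "f integrable_on S"
proof -
  have "bounded (f ` S)" using compact_continuous_image[OF f S] compact_imp_bounded by blast
  then obtain B where B: "\<And>x. x \<in> S \<Longrightarrow> norm (f x) \<le> B"
    by (meson bounded_iff imageI)
  have Sl: "S \<in> lmeasurable" using S lmeasurable_compact by blast
  have "f absolutely_integrable_on S"
    apply (rule measurable_bounded_by_integrable_imp_absolutely_integrable[where g="\<lambda>x. B"])
    using continuous_imp_measurable_on_sets_lebesgue[OF f] Sl B integrable_on_const[OF Sl]
    by auto
  then show ?thesis using absolutely_integrable_on_def by blast
qed

lemma key:
  fixes V A :: "'a::euclidean_space set" and y e :: 'a
  assumes V: "compact V" "convex V" "y \<in> V" and A: "A \<subseteq> V" "compact A"
    and sig: "\<And>x. x \<in> A \<Longrightarrow> \<sigma> \<le> inner (x - y) e" and e: "norm e = 1" and s0: "0 \<le> \<sigma>"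
  shows "\<exists>y'\<in>V. measure lebesgue A * \<sigma>\<^sup>2 \<le> integral V (\<lambda>x. (dist x y)\<^sup>2 - (min (dist x y) (dist x y'))\<^sup>2)"
proof -
  define F where "F = (\<lambda>y' x. (dist x y)\<^sup>2 - (min (dist x y) (dist x y'))\<^sup>2)"
  have Fc: "continuous_on S (F y')" for S y'
    unfolding F_def by (intro continuous_intros)
  have FV: "F y' integrable_on V" for y' using cont_int_compact[OF V(1) Fc] .
  have FA: "F y' integrable_on A" for y' using cont_int_compact[OF A(2) Fc] .
  have Fnn: "0 \<le> F y' x" for y' x
    unfolding F_def by (simp add: power_mono)
  have Fge: "(dist x y)\<^sup>2 - (dist x y')\<^sup>2 \<le> F y' x" for y' x
    unfolding F_def by (simp add: power_mono)
  have Al: "A \<in> lmeasurable" using A(2) lmeasurable_compact by blast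
  define m where "m = measure lebesgue A"
  have m0: "0 \<le> m" unfolding m_def by simp
  show ?thesis
  proof (cases "m = 0")
    case True
    have "0 \<le> integral V (F y)" using integral_nonneg[OF FV Fnn] .
    then show ?thesis using V(3) True unfolding m_def F_def by (intro bexI[of _ y]) auto
  next
    case False
    then have mpos: "0 < m" using m0 by simp
    define I where "I = integral A (\<lambda>x. x)"
    define c where "c = (1/m) *\<^sub>R I"
    have idA: "(\<lambda>x. x) integrable_on A" by (rule cont_int_compact[OF A(2)]) (intro continuous_intros)
    have cA: "(\<lambda>x. k) integrable_on A" for k :: real using integrable_on_const[OF Al] .
    have intc: "integral A (\<lambda>x. k) = k * m" for k :: real
    proof -
      have "integral A (\<lambda>x. k * 1) = k * integral A (\<lambda>x. 1)" by (rule integral_mult_right)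
      then show ?thesis using lmeasure_integral[OF Al] unfolding m_def by simp
    qed
    have inI: "integral A (\<lambda>x. x \<bullet> a) = I \<bullet> a" for a
      unfolding I_def using integral_component_eq[OF idA] .
    have inA: "(\<lambda>x. x \<bullet> a) integrable_on A" for a
      by (rule cont_int_compact[OF A(2)]) (intro continuous_intros)
    have cV: "c \<in> V"
    proof (rule ccontr)
      assume "c \<notin> V"
      then obtain a b where ab: "inner a c < b" "\<forall>x\<in>V. b < inner a x"
        using separating_hyperplane_closed_point[OF V(2) compact_imp_closed[OF V(1)]] by blast
      have "integral A (\<lambda>x. b) \<le> integral A (\<lambda>x. x \<bullet> a)"
        using ab(2) A(1) by (intro integral_le[OF cA inA]) (auto simp: inner_commute less_imp_le)
      then have "b * m \<le> I \<bullet> a" using intc inI by simp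
      then have "b \<le> c \<bullet> a" unfolding c_def using mpos by (simp add: field_simps)
      then show False using ab(1) by (simp add: inner_commute)
    qed
    have "integral A (\<lambda>x. \<sigma>) \<le> integral A (\<lambda>x. x \<bullet> e - y \<bullet> e)"
      using sig by (intro integral_le[OF cA]) (auto intro: integrable_diff inA cA simp: inner_diff_left)
    also have "\<dots> = I \<bullet> e - (y \<bullet> e) * m"
      using integral_diff[OF inA cA] inI intc by simp
    finally have "\<sigma> * m \<le> I \<bullet> e - (y \<bullet> e) * m" using intc by simp
    then have "\<sigma> \<le> (c - y) \<bullet> e" unfolding c_def using mpos
      by (simp add: inner_diff_left field_simps)
    also have "\<dots> \<le> norm (c - y)" using norm_cauchy_schwarz[of "c - y" e] e by simp
    finally have sd: "\<sigma>\<^sup>2 \<le> (dist c y)\<^sup>2" using s0 by (simp add: dist_norm power_mono)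
    have eqd: "(dist x y)\<^sup>2 - (dist x c)\<^sup>2 = 2 * (x \<bullet> (c - y)) + (y \<bullet> y - c \<bullet> c)" for x
      by (simp add: dist_norm power2_norm_eq_inner inner_diff_left inner_diff_right inner_commute algebra_simps)
    have "integral A (\<lambda>x. (dist x y)\<^sup>2 - (dist x c)\<^sup>2) = integral A (\<lambda>x. 2 * (x \<bullet> (c - y)) + (y \<bullet> y - c \<bullet> c))"
      using eqd by simp
    also have "\<dots> = 2 * (I \<bullet> (c - y)) + (y \<bullet> y - c \<bullet> c) * m"
      using integral_add[OF integrable_on_cmult_left[OF inA] cA] integral_mult_left inI intc by simp
    also have "\<dots> = m * (dist c y)\<^sup>2"
    proof -
      have "I = m *\<^sub>R c" unfolding c_def using mpos by simp
      then show ?thesis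
        by (simp add: dist_norm power2_norm_eq_inner inner_diff_left inner_diff_right inner_commute algebra_simps)
    qed
    finally have eqi: "integral A (\<lambda>x. (dist x y)\<^sup>2 - (dist x c)\<^sup>2) = m * (dist c y)\<^sup>2" .
    have "m * \<sigma>\<^sup>2 \<le> m * (dist c y)\<^sup>2" using sd m0 by (simp add: mult_left_mono)
    also have "\<dots> \<le> integral A (F c)"
      unfolding eqi[symmetric]
      by (rule integral_le) (auto intro!: Fge FA cont_int_compact[OF A(2)] continuous_intros)
    also have "\<dots> \<le> integral V (F c)"
      using integral_subset_le[OF A(1) FA FV] Fnn by auto
    finally show ?thesis using cV unfolding m_def F_def by blast
  qed
qed

lemma far_point:
  fixes V :: "'a::euclidean_space set"
  assumes V: "compact V" "convex V" and y: "y \<in> interior V" and x: "x \<in> V"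
  shows "\<exists>p\<in>frontier V. dist x y \<le> dist p y"
proof (cases "x = y")
  case True
  have "frontier V \<noteq> {}"
  proof
    assume "frontier V = {}"
    then have "V = {} \<or> V = UNIV" by (simp add: frontier_eq_empty)
    then show False using y interior_subset compact_imp_bounded[OF V(1)] not_bounded_UNIV by blast
  qed
  then show ?thesis using True by auto
next
  case False
  then have l: "x - y \<noteq> 0" by simp
  obtain d where d: "0 < d" "y + d *\<^sub>R (x - y) \<in> frontier V"
    using ray_to_frontier[OF compact_imp_bounded[OF V(1)] y l] by blast
  have "1 \<le> d"
  proof (rule ccontr)
    assume "\<not> 1 \<le> d"
    then have "y + d *\<^sub>R (x - y) \<in> open_segment y x"
      using d(1) False unfolding in_segment
      by (intro conjI exI[of _ d]) (auto simp: algebra_simps)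
    then have "y + d *\<^sub>R (x - y) \<in> interior V"
      using in_interior_closure_convex_segment[OF V(2) y] x closure_subset by blast
    then show False using d(2) by (simp add: frontier_def)
  qed
  have "dist (y + d *\<^sub>R (x - y)) y = d * dist x y"
    using d(1) by (simp add: dist_norm)
  then have "dist x y \<le> dist (y + d *\<^sub>R (x - y)) y"
    using \<open>1 \<le> d\<close> by (simp add: mult_le_cancel_right1)
  then show ?thesis using d(2) by blast
qed

lemma cube_measure:
  fixes y :: "'a::euclidean_space" assumes "0 \<le> \<rho>"
  shows "measure lebesgue (cbox (y - \<rho> *\<^sub>R One) (y + \<rho> *\<^sub>R One)) = (2 * \<rho>) ^ DIM('a)"
proof -
  have "measure lebesgue (cbox (y - \<rho> *\<^sub>R One) (y + \<rho> *\<^sub>R One)) = Henstock_Kurzweil_Integration.content (cbox (y - \<rho> *\<^sub>R One) (y + \<rho> *\<^sub>R One))"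
    by (simp add: measure_completion)
  also have "\<dots> = (\<Prod>i\<in>(Basis::'a set). 2 * \<rho>)"
    using assms by (subst content_cbox) (auto simp: inner_diff_left inner_add_left inner_commute[of _ One] inner_sum_Basis)
  finally show ?thesis by simp
qed

lemma powr_alg:
  fixes m :: real assumes "0 < m"
  shows "((2/5) powr (2/3) / 40) * m powr (5/3) = m / 10 * ((m/20) powr (1/3))\<^sup>2"
proof -
  have a: "((m/20) powr (1/3))\<^sup>2 = (m/20) powr (2/3)"
    using assms by (simp add: powr_realpow[symmetric] powr_powr)
  have b: "m powr (5/3) = m * m powr (2/3)"
  proof -
    have "m powr (5/3) = m powr (1 + 2/3)" by simp
    also have "\<dots> = m * m powr (2/3)" using assms by (simp only: powr_add powr_one)
    finally show ?thesis .
  qed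
  have c: "(8::real) powr (2/3) = 4"
  proof -
    have "(8::real) = 2 powr 3" by simp
    then have "(8::real) powr (2/3) = 2 powr 2" by (simp add: powr_powr)
    then show ?thesis by simp
  qed
  have d: "(2/5::real) powr (2/3) = 8 powr (2/3) * (1/20) powr (2/3)"
    by (subst powr_mult[symmetric]) auto
  have e: "(m/20) powr (2/3) = m powr (2/3) * (1/20) powr (2/3)"
    using assms by (subst powr_mult[symmetric]) auto
  show ?thesis unfolding a b d e c by simp
qed

lemma bound2:
  fixes V :: "(real^3) set"
  assumes V: "compact V" "convex V" "y \<in> V"
  shows "\<exists>y'\<in>V. ((2/5) powr (2/3) / 40) * (measure lebesgue V) powr (5/3)
     \<le> integral V (\<lambda>x. (dist x y)\<^sup>2 - (min (dist x y) (dist x y'))\<^sup>2)"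
proof -
  define m where "m = measure lebesgue V"
  obtain b0 :: "real^3" where b0: "b0 \<in> Basis" using nonempty_Basis by blast
  show ?thesis
  proof (cases "m = 0")
    case True
    obtain y' where "y' \<in> V" "measure lebesgue {} * 0\<^sup>2 \<le> integral V (\<lambda>x. (dist x y)\<^sup>2 - (min (dist x y) (dist x y'))\<^sup>2)"
      using key[OF V, of "{}" 0 b0] b0 by auto
    then show ?thesis using True unfolding m_def by auto
  next
    case False
    then have mpos: "0 < m" unfolding m_def by (simp add: less_le)
    define \<rho> where "\<rho> = (m/20) powr (1/3)"
    have rpos: "0 < \<rho>" unfolding \<rho>_def using mpos by simp
    have r3: "\<rho> ^ 3 = m / 20"
      unfolding \<rho>_def using mpos by (simp add: powr_realpow[symmetric] powr_powr)
    define Q where "Q = cbox (y - \<rho> *\<^sub>R One) (y + \<rho> *\<^sub>R (One::real^3))"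
    have mQ: "measure lebesgue Q = 2 * m / 5"
      unfolding Q_def using cube_measure[of \<rho> y] rpos r3 by (simp add: power_mult_distrib)
    define E where "E = (Basis :: (real^3) set) \<union> uminus ` Basis"
    define Ae where "Ae = (\<lambda>e. V \<inter> {x. \<rho> \<le> (x - y) \<bullet> e})"
    have fE: "finite E" unfolding E_def by simp
    have cE: "card E \<le> 6"
    proof -
      have "card E \<le> card (Basis :: (real^3) set) + card (uminus ` (Basis :: (real^3) set))"
        unfolding E_def by (rule card_Un_le)
      also have "\<dots> \<le> 3 + 3" using card_image_le[of "Basis :: (real^3) set" uminus] by simp
      finally show ?thesis by simp
    qed
    have nE: "E \<noteq> {}" unfolding E_def using b0 by auto
    have cAe: "compact (Ae e)" for e
      unfolding Ae_def
      by (intro compact_Int_closed V(1) closed_Collect_le) (auto intro!: continuous_intros)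
    have cQ: "compact Q" unfolding Q_def by simp
    have cover: "V \<subseteq> Q \<union> (\<Union>e\<in>E. Ae e)"
    proof
      fix x assume xV: "x \<in> V"
      show "x \<in> Q \<union> (\<Union>e\<in>E. Ae e)"
      proof (cases "x \<in> Q")
        case True then show ?thesis by simp
      next
        case False
        have iO: "\<And>i. i \<in> (Basis::(real^3) set) \<Longrightarrow> i \<bullet> One = 1" by (metis inner_commute inner_sum_Basis)
        from False obtain i where i: "i \<in> Basis" "\<not> (y \<bullet> i - \<rho> \<le> x \<bullet> i \<and> x \<bullet> i \<le> y \<bullet> i + \<rho>)"
          unfolding Q_def mem_box by (auto simp: inner_diff_left inner_add_left iO)
        show ?thesis
        proof (cases "x \<bullet> i < y \<bullet> i - \<rho>")
          case True
          then have "x \<in> Ae (-i)" unfolding Ae_def using xV by (simp add: inner_diff_left)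
          moreover have "-i \<in> E" unfolding E_def using i(1) by auto
          ultimately show ?thesis by blast
        next
          case False
          then have "x \<in> Ae i" unfolding Ae_def using xV i(2) by (simp add: inner_diff_left)
          moreover have "i \<in> E" unfolding E_def using i(1) by auto
          ultimately show ?thesis by blast
        qed
      qed
    qed
    have cU: "compact (Q \<union> (\<Union>e\<in>E. Ae e))"
      using cQ cAe fE by (intro compact_Un compact_UN) auto
    have "m \<le> measure lebesgue (Q \<union> (\<Union>e\<in>E. Ae e))"
      unfolding m_def
      using lmeasurable_compact[OF V(1)] lmeasurable_compact[OF cU]
      by (intro measure_mono_fmeasurable[OF cover]) (auto dest: fmeasurableD)
    also have "\<dots> \<le> measure lebesgue Q + measure lebesgue (\<Union>e\<in>E. Ae e)"
      using lmeasurable_compact[OF cQ] lmeasurable_compact[OF compact_UN[OF fE cAe]]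
      by (intro measure_Un_le) (auto dest: fmeasurableD)
    also have "measure lebesgue (\<Union>e\<in>E. Ae e) \<le> (\<Sum>e\<in>E. measure lebesgue (Ae e))"
      using lmeasurable_compact[OF cAe] fE by (intro measure_UNION_le) (auto dest: fmeasurableD)
    finally have tot: "m \<le> 2 * m / 5 + (\<Sum>e\<in>E. measure lebesgue (Ae e))" using mQ by simp
    have "\<exists>e\<in>E. m / 10 \<le> measure lebesgue (Ae e)"
    proof (rule ccontr)
      assume "\<not> ?thesis"
      then have "\<forall>e\<in>E. measure lebesgue (Ae e) < m / 10" by auto
      then have "(\<Sum>e\<in>E. measure lebesgue (Ae e)) < (\<Sum>e\<in>E. m / 10)"
        using fE nE by (intro sum_strict_mono) auto
      also have "\<dots> = card E * (m / 10)" by simp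
      also have "\<dots> \<le> 6 * (m / 10)" using cE mpos by (intro mult_right_mono) auto
      finally show False using tot by simp
    qed
    then obtain e where e: "e \<in> E" "m / 10 \<le> measure lebesgue (Ae e)" by blast
    have ne: "norm e = 1" using e(1) unfolding E_def by auto
    obtain y' where y': "y' \<in> V" "measure lebesgue (Ae e) * \<rho>\<^sup>2 \<le> integral V (\<lambda>x. (dist x y)\<^sup>2 - (min (dist x y) (dist x y'))\<^sup>2)"
    proof -
      have sigAe: "\<And>x. x \<in> Ae e \<Longrightarrow> \<rho> \<le> (x - y) \<bullet> e" unfolding Ae_def by auto
      have AeV: "Ae e \<subseteq> V" unfolding Ae_def by auto
      show ?thesis using key[OF V AeV cAe sigAe ne less_imp_le[OF rpos]] that by blast
    qed
    have "m / 10 * \<rho>\<^sup>2 \<le> measure lebesgue (Ae e) * \<rho>\<^sup>2"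
      using mult_right_mono[OF e(2), of "\<rho>\<^sup>2"] by simp
    moreover have pa: "((2/5) powr (2/3) / 40) * m powr (5/3) = m/10 * \<rho>\<^sup>2"
      using powr_alg[OF mpos] unfolding \<rho>_def .
    ultimately have "((2/5) powr (2/3) / 40) * m powr (5/3) \<le> integral V (\<lambda>x. (dist x y)\<^sup>2 - (min (dist x y) (dist x y'))\<^sup>2)"
      using y'(2) by linarith
    then show ?thesis using y'(1) unfolding m_def by blast
  qed
qed

lemma pick:
  fixes f :: "'a \<Rightarrow> real"
  assumes "a \<le> f y1" "b \<le> f y2" "y1 \<in> V" "y2 \<in> V"
  shows "\<exists>y'\<in>V. max a b \<le> f y'"
proof (cases "b \<le> a")
  case True then show ?thesis using assms by (intro bexI[of _ y1]) auto
next
  case False then show ?thesis using assms by (intro bexI[of _ y2]) auto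
qed

theorem lemma3p1:
  fixes V :: "(real^3) set" and y :: "real^3"
  assumes "compact V" and "convex V" and "y \<in> interior V"
  shows "\<exists>y'\<in>V.
    integral V (\<lambda>x. (dist x y)\<^sup>2 - (min (dist x y) (dist x y'))\<^sup>2)
      \<ge> max ((2^2 * 3^3) / (5^2 * 10^3) * (SUP z\<in>frontier V. dist z y)\<^sup>2 * measure lebesgue V)
             (((2/5) powr (2/3) / 40) * (measure lebesgue V) powr (5/3))"
proof -
  note V = assms(1,2)
  have yV: "y \<in> V" using assms(3) interior_subset by blast
  have fne: "frontier V \<noteq> {}"
  proof
    assume "frontier V = {}"
    then have "V = {} \<or> V = UNIV" by (simp add: frontier_eq_empty)
    then show False using assms(3) interior_subset compact_imp_bounded[OF V(1)] not_bounded_UNIV by blast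
  qed
  have cd: "continuous_on (frontier V) (\<lambda>p. dist p y)" by (intro continuous_intros)
  obtain z where z: "z \<in> frontier V" "\<forall>p\<in>frontier V. dist p y \<le> dist z y"
    using continuous_attains_sup[OF compact_frontier[OF V(1)] fne cd] by blast
  define r where "r = (SUP z\<in>frontier V. dist z y)"
  have rz: "r = dist z y" unfolding r_def
    by (rule cSup_eq_maximum) (use z in auto)
  have zV: "z \<in> V" using z(1) frontier_subset_closed compact_imp_closed[OF V(1)] by blast
  have zy: "z \<noteq> y" using z(1) assms(3) by (auto simp: frontier_def)
  have rpos: "0 < r" using rz zy by simp
  have allx: "dist x y \<le> r" if "x \<in> V" for x
    using far_point[OF V assms(3) that] z(2) rz by force
  define e where "e = (1/r) *\<^sub>R (z - y)"
  have ne: "norm e = 1" unfolding e_def using rpos rz by (simp add: dist_norm)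
  have zye: "(z - y) \<bullet> e = r" unfolding e_def using rpos rz
    by (simp add: dist_norm power2_norm_eq_inner[symmetric] power2_eq_square)
  define A where "A = (\<lambda>x. (3/10) *\<^sub>R x + (7/10) *\<^sub>R z) ` V"
  have AV: "A \<subseteq> V" unfolding A_def
    using V(2) zV by (auto simp: convex_def)
  have cA: "compact A" unfolding A_def
    by (rule compact_continuous_image[OF _ V(1)]) (intro continuous_intros)
  have mA: "measure lebesgue A = (3/10)^3 * measure lebesgue V"
    unfolding A_def using measure_lebesgue_affine[of "3/10" "(7/10) *\<^sub>R z" V] by simp
  have sig: "(2/5) * r \<le> (a - y) \<bullet> e" if aA: "a \<in> A" for a
  proof -
    obtain x where x: "x \<in> V" "a = (3/10) *\<^sub>R x + (7/10) *\<^sub>R z" using aA unfolding A_def by blast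
    have yy: "(3/10) *\<^sub>R y + (7/10) *\<^sub>R y = y"
      by (simp add: scaleR_left_distrib[symmetric])
    have "(3/10) *\<^sub>R (x - y) + (7/10) *\<^sub>R (z - y) = a - ((3/10) *\<^sub>R y + (7/10) *\<^sub>R y)"
      using x(2) by (simp add: algebra_simps)
    then have "a - y = (3/10) *\<^sub>R (x - y) + (7/10) *\<^sub>R (z - y)" using yy by simp
    then have aye: "(a - y) \<bullet> e = (3/10) * ((x - y) \<bullet> e) + (7/10) * r"
      using zye by (simp add: inner_add_left)
    have "- ((x - y) \<bullet> e) \<le> norm (x - y)"
      using norm_cauchy_schwarz[of "y - x" e] ne norm_minus_commute[of x y] by (simp add: inner_diff_left)
    then have "- r \<le> (x - y) \<bullet> e" using allx[OF x(1)] by (simp add: dist_norm)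
    then show ?thesis using aye by simp
  qed
  obtain y1 where y1: "y1 \<in> V" "measure lebesgue A * ((2/5) * r)\<^sup>2 \<le> integral V (\<lambda>x. (dist x y)\<^sup>2 - (min (dist x y) (dist x y1))\<^sup>2)"
    using key[OF V yV AV cA sig ne] rpos by auto
  have b1: "(2^2 * 3^3) / (5^2 * 10^3) * r\<^sup>2 * measure lebesgue V \<le> integral V (\<lambda>x. (dist x y)\<^sup>2 - (min (dist x y) (dist x y1))\<^sup>2)"
  proof -
    have eqb: "(2^2 * 3^3) / (5^2 * 10^3) * r\<^sup>2 * measure lebesgue V = measure lebesgue A * ((2/5) * r)\<^sup>2"
      unfolding mA by (simp add: power2_eq_square power_divide)
    show ?thesis unfolding eqb by (rule y1(2))
  qed
  obtain y2 where y2: "y2 \<in> V" "((2/5) powr (2/3) / 40) * (measure lebesgue V) powr (5/3) \<le> integral V (\<lambda>x. (dist x y)\<^sup>2 - (min (dist x y) (dist x y2))\<^sup>2)"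
    using bound2[OF V yV] by blast
  have "\<exists>y'\<in>V. max ((2^2 * 3^3) / (5^2 * 10^3) * r\<^sup>2 * measure lebesgue V)
             (((2/5) powr (2/3) / 40) * (measure lebesgue V) powr (5/3))
      \<le> integral V (\<lambda>x. (dist x y)\<^sup>2 - (min (dist x y) (dist x y'))\<^sup>2)"
    by (rule pick[where f="\<lambda>y'. integral V (\<lambda>x. (dist x y)\<^sup>2 - (min (dist x y) (dist x y'))\<^sup>2)", OF b1 y2(2) y1(1) y2(1)])
  then show ?thesis unfolding r_def by simp
qed
end
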